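(* Let $(X,d)$ be a compact metric space and let $f:X\to X$ be an arbitrary map (no continuity assumed). If $(C_k)_{k\in\mathbb{N}}$ is a sequence of chain components in $\mathfrak{C}_f$ such that $C_{k+1}\prec C_k$ for every $k$, then there is a chain component $C\in\mathfrak{C}_f$ with $C\prec C_k$ for every $k\in\mathbb{N}$.
   Context: For a metric space $(X,d)$ and map $f:X\to X$: an $\varepsilon$-chain from $x$ to $y$ is a finite sequence $x_0=x,\dots,x_n=y$, $n\ge1$, with $d(f(x_i),x_{i+1})<\varepsilon$; $x\,\mathcal{C}\,y$ iff for every $\varepsilon>0$ there is an $\varepsilon$-chain from $x$ to $y$; $CR_f=\{x:x\,\mathcal{C}\,x\}$; $x\,E\,y$ iff $x\,\mathcal{C}\,y$ and $y\,\mathcal{C}\,x$; $\mathfrak{C}_f=CR_f/E$ is the set of chain components, partially ordered by $[x]\preceq[y]$ iff $y\,\mathcal{C}\,x$; $\prec$ denotes $\preceq$ together with $\neq$. *)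

theory Defs
  imports "HOL-Analysis.Analysis"
begin

definition eps_chain :: "('a::metric_space \<Rightarrow> 'a) \<Rightarrow> real \<Rightarrow> 'a \<Rightarrow> 'a \<Rightarrow> bool" where
  "eps_chain f \<epsilon> x y \<longleftrightarrow>
     (\<exists>n::nat. \<exists>xs::nat \<Rightarrow> 'a. n \<ge> 1 \<and> xs 0 = x \<and> xs n = y \<and>
        (\<forall>i<n. dist (f (xs i)) (xs (Suc i)) < \<epsilon>))"

definition chain_rel :: "('a::metric_space \<Rightarrow> 'a) \<Rightarrow> 'a \<Rightarrow> 'a \<Rightarrow> bool" where
  "chain_rel f x y \<longleftrightarrow> (\<forall>\<epsilon>>0. eps_chain f \<epsilon> x y)"

definition CR :: "('a::metric_space \<Rightarrow> 'a) \<Rightarrow> 'a set" where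
  "CR f = {x. chain_rel f x x}"

definition chainE :: "('a::metric_space \<Rightarrow> 'a) \<Rightarrow> ('a \<times> 'a) set" where
  "chainE f = {(x, y). x \<in> CR f \<and> y \<in> CR f \<and> chain_rel f x y \<and> chain_rel f y x}"

definition chain_components :: "('a::metric_space \<Rightarrow> 'a) \<Rightarrow> 'a set set" where
  "chain_components f = CR f // chainE f"

definition comp_le :: "('a::metric_space \<Rightarrow> 'a) \<Rightarrow> 'a set \<Rightarrow> 'a set \<Rightarrow> bool" where
  "comp_le f A B \<longleftrightarrow> (\<exists>x\<in>A. \<exists>y\<in>B. chain_rel f y x)"

definition comp_less :: "('a::metric_space \<Rightarrow> 'a) \<Rightarrow> 'a set \<Rightarrow> 'a set \<Rightarrow> bool" where
  "comp_less f A B \<longleftrightarrow> comp_le f A B \<and> A \<noteq> B"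

end

theory Submission
  imports Defs
begin

lemma eps_chain_trans:
  assumes "eps_chain f e x y" "eps_chain f e y z"
  shows "eps_chain f e x z"
proof -
  obtain n xs where n: "n \<ge> 1" "xs 0 = x" "xs n = y" "\<forall>i<n. dist (f (xs i)) (xs (Suc i)) < e"
    using assms(1) unfolding eps_chain_def by blast
  obtain m ys where m: "m \<ge> 1" "ys 0 = y" "ys m = z" "\<forall>i<m. dist (f (ys i)) (ys (Suc i)) < e"
    using assms(2) unfolding eps_chain_def by blast
  define zs where "zs i = (if i \<le> n then xs i else ys (i - n))" for i
  have "\<forall>i<n+m. dist (f (zs i)) (zs (Suc i)) < e"
  proof (intro allI impI)
    fix i assume i: "i < n + m"
    show "dist (f (zs i)) (zs (Suc i)) < e"
    proof (cases "i < n")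
      case True
      then show ?thesis using n(4) by (simp add: zs_def)
    next
      case False
      then have a: "zs i = ys (i - n)" using n m by (auto simp: zs_def)
      have b: "zs (Suc i) = ys (Suc (i - n))" using False by (simp add: zs_def Suc_diff_le)
      show ?thesis using a b m(4) i False by simp
    qed
  qed
  moreover have "zs 0 = x" "zs (n+m) = z" using n m by (auto simp: zs_def)
  ultimately show ?thesis unfolding eps_chain_def using n(1)
    by (intro exI[of _ "n+m"] exI[of _ zs]) auto
qed

lemma chain_rel_trans: "chain_rel f x y \<Longrightarrow> chain_rel f y z \<Longrightarrow> chain_rel f x z"
  unfolding chain_rel_def using eps_chain_trans by blast

lemma eps_chain_end:
  assumes "eps_chain f e x y" "dist y z < d"
  shows "eps_chain f (e + d) x z"
proof -
  obtain n xs where n: "n \<ge> 1" "xs 0 = x" "xs n = y" "\<forall>i<n. dist (f (xs i)) (xs (Suc i)) < e"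
    using assms(1) unfolding eps_chain_def by blast
  define zs where "zs = xs(n := z)"
  have d: "d > 0" using assms(2) zero_le_dist[of y z] by linarith
  have "\<forall>i<n. dist (f (zs i)) (zs (Suc i)) < e + d"
  proof (intro allI impI)
    fix i assume i: "i < n"
    show "dist (f (zs i)) (zs (Suc i)) < e + d"
    proof (cases "Suc i = n")
      case True
      have "dist (f (xs i)) z \<le> dist (f (xs i)) y + dist y z" by (rule dist_triangle)
      moreover have "dist (f (xs i)) y < e" using n(4) i True n(3) by metis
      moreover have "zs i = xs i" "zs (Suc i) = z" using True by (auto simp: zs_def)
      ultimately show ?thesis using assms(2) by simp
    next
      case False
      have "dist (f (xs i)) (xs (Suc i)) < e" using n(4) i by blast
      then show ?thesis using False i d by (simp add: zs_def)
    qed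
  qed
  moreover have "zs 0 = x" "zs n = z" using n by (auto simp: zs_def)
  ultimately show ?thesis unfolding eps_chain_def using n(1) by blast
qed

lemma chain_rel_closed:
  assumes "g \<longlonglongrightarrow> z" "\<forall>n. chain_rel f x (g n)"
  shows "chain_rel f x z"
  unfolding chain_rel_def
proof (intro allI impI)
  fix e :: real assume e: "e > 0"
  then have "e/2 > 0" by simp
  then obtain N where "\<forall>n\<ge>N. dist (g n) z < e/2" using assms(1) LIMSEQ_iff_nz[of g z] by blast
  then have "dist (g N) z < e/2" by simp
  moreover have "eps_chain f (e/2) x (g N)" using assms(2) \<open>e/2>0\<close> unfolding chain_rel_def by blast
  ultimately have "eps_chain f (e/2 + e/2) x z" using eps_chain_end by blast
  then show "eps_chain f e x z" by simp
qed

lemma chain_rel_f: "chain_rel f z (f z)"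
  unfolding chain_rel_def eps_chain_def
  by (intro allI impI exI[of _ 1] exI[of _ "\<lambda>i. if i = 0 then z else f z"]) auto

lemma closed_S: "closed {w. chain_rel f y w}"
  unfolding closed_sequential_limits using chain_rel_closed by blast

lemma finite_chain_min:
  assumes "finite F" "F \<noteq> {}" "\<forall>A\<in>F. \<forall>B\<in>F. A \<subseteq> B \<or> B \<subseteq> A"
  shows "\<exists>M\<in>F. \<forall>X\<in>F. M \<subseteq> X"
  using assms
proof (induction F rule: finite_ne_induct)
  case (singleton x)
  then show ?case by auto
next
  case (insert x F)
  then obtain M where M: "M \<in> F" "\<forall>X\<in>F. M \<subseteq> X" by auto
  show ?case
  proof (cases "x \<subseteq> M")
    case True
    then show ?thesis using M by auto
  next
    case False
    then have "M \<subseteq> x" using insert.prems M(1) by auto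
    then show ?thesis using M by auto
  qed
qed

lemma exists_recurrent:
  fixes f :: "'a::metric_space \<Rightarrow> 'a"
  assumes cpt: "compact (UNIV :: 'a set)"
  shows "\<exists>y. chain_rel f z y \<and> chain_rel f y y"
proof -
  define S where "S y = {w. chain_rel f y w}" for y
  define A where "A = {- S y | y. y \<in> S z}"
  have Strans: "S w \<subseteq> S y" if "w \<in> S y" for w y
    using that chain_rel_trans unfolding S_def by blast
  have "\<forall>Ch\<in>chains A. \<exists>U\<in>A. \<forall>X\<in>Ch. X \<subseteq> U"
  proof
    fix Ch assume Ch: "Ch \<in> chains A"
    show "\<exists>U\<in>A. \<forall>X\<in>Ch. X \<subseteq> U"
    proof (cases "Ch = {}")
      case True
      have "- S (f z) \<in> A" unfolding A_def S_def using chain_rel_f by blast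
      then show ?thesis using True by blast
    next
      case False
      define F where "F = uminus ` Ch"
      have ChA: "Ch \<subseteq> A" using Ch unfolding chains_def by blast
      have FS: "\<forall>T\<in>F. \<exists>y. y \<in> S z \<and> T = S y"
      proof
        fix T assume "T \<in> F"
        then obtain X where X: "X \<in> Ch" "T = - X" unfolding F_def by blast
        then have "X \<in> A" using ChA by blast
        then obtain y where "y \<in> S z" "X = - S y" unfolding A_def by blast
        then show "\<exists>y. y \<in> S z \<and> T = S y" using X(2) by auto
      qed
      have "UNIV \<inter> \<Inter> F \<noteq> {}"
      proof (rule compact_imp_fip[OF cpt])
        fix T assume "T \<in> F"
        then obtain y where "T = S y" using FS by blast
        then show "closed T" using closed_S[of f y] unfolding S_def by simp
      next
        fix F' assume F': "finite F'" "F' \<subseteq> F"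
        show "UNIV \<inter> \<Inter> F' \<noteq> {}"
        proof (cases "F' = {}")
          case True then show ?thesis by simp
        next
          case False
          have chCh: "\<forall>A\<in>Ch. \<forall>B\<in>Ch. A \<subseteq> B \<or> B \<subseteq> A"
            using Ch unfolding chains_def chain_subset_def by blast
          have "\<forall>A\<in>F'. \<forall>B\<in>F'. A \<subseteq> B \<or> B \<subseteq> A"
          proof (intro ballI)
            fix A B assume "A \<in> F'" "B \<in> F'"
            then obtain A' B' where "A' \<in> Ch" "B' \<in> Ch" "A = - A'" "B = - B'"
              using F'(2) unfolding F_def by blast
            then show "A \<subseteq> B \<or> B \<subseteq> A" using chCh by blast
          qed
          then obtain M where M: "M \<in> F'" "\<forall>X\<in>F'. M \<subseteq> X"
            using finite_chain_min[OF F'(1) False] by blast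
          have "M \<in> F" using M(1) F'(2) by blast
          then obtain y where "M = S y" using FS by blast
          then have "f y \<in> M" using chain_rel_f unfolding S_def by blast
          then show ?thesis using M by blast
        qed
      qed
      then obtain w where w: "w \<in> \<Inter> F" by blast
      obtain X0 where "X0 \<in> Ch" using False by blast
      then obtain y0 where y0: "y0 \<in> S z" "- X0 = S y0" using FS unfolding F_def by blast
      have "- X0 \<in> F" using \<open>X0 \<in> Ch\<close> unfolding F_def by blast
      then have "w \<in> S y0" using w y0(2) by blast
      then have wz: "w \<in> S z" using Strans[OF y0(1)] by blast
      have "- S w \<in> A" using wz unfolding A_def by blast
      moreover have "\<forall>X\<in>Ch. X \<subseteq> - S w"
      proof
        fix X assume X: "X \<in> Ch"
        then obtain y where "-X = S y" using FS unfolding F_def by blast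
        moreover have "- X \<in> F" using X unfolding F_def by blast
        then have "w \<in> -X" using w by blast
        ultimately have "S w \<subseteq> -X" using Strans[of w y] by simp
        then show "X \<subseteq> - S w" by blast
      qed
      ultimately show ?thesis by blast
    qed
  qed
  then obtain M where M: "M \<in> A" "\<forall>X\<in>A. M \<subseteq> X \<longrightarrow> X = M"
    using Zorn_Lemma2[of A] by blast
  then obtain y0 where y0: "y0 \<in> S z" "M = - S y0" unfolding A_def by blast
  define y where "y = f y0"
  have yy0: "y \<in> S y0" unfolding y_def S_def using chain_rel_f by blast
  have "S y \<subseteq> S y0" using Strans yy0 by blast
  moreover have "y \<in> S z" using yy0 y0(1) Strans by blast
  ultimately have "- S y \<in> A" "M \<subseteq> - S y" using y0(2) unfolding A_def by auto
  then have "- S y = M" using M(2) by blast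
  then have "S y = S y0" using y0 by auto
  then have "y \<in> S y" using yy0 by simp
  then show ?thesis using \<open>y \<in> S z\<close> unfolding S_def by blast
qed

theorem theorem3p6:
  fixes f :: "'a::metric_space \<Rightarrow> 'a"
    and C :: "nat \<Rightarrow> 'a set"
  assumes "compact (UNIV :: 'a set)"
    and "\<And>k. C k \<in> chain_components f"
    and "\<And>k. comp_less f (C (Suc k)) (C k)"
  shows "\<exists>D \<in> chain_components f. \<forall>k. comp_less f D (C k)"
proof -
  have mem: "a \<in> chainE f `` {c} \<longleftrightarrow> a \<in> CR f \<and> c \<in> CR f \<and> chain_rel f c a \<and> chain_rel f a c" for a c
    unfolding chainE_def by auto
  have "\<exists>c. c \<in> CR f \<and> C k = chainE f `` {c}" for k
    using assms(2)[of k] unfolding chain_components_def quotient_def by blast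
  then obtain c where c: "\<And>k. c k \<in> CR f" "\<And>k. C k = chainE f `` {c k}" by metis
  have step: "chain_rel f (c k) (c (Suc k))" for k
  proof -
    obtain a b where ab: "a \<in> C (Suc k)" "b \<in> C k" "chain_rel f b a"
      using assms(3)[of k] unfolding comp_less_def comp_le_def by blast
    have "chain_rel f (c k) b" "chain_rel f a (c (Suc k))" using ab(1,2) unfolding c(2) mem by auto
    then show ?thesis using ab(3) chain_rel_trans by blast
  qed
  have nstep: "\<not> chain_rel f (c (Suc k)) (c k)" for k
  proof
    assume h: "chain_rel f (c (Suc k)) (c k)"
    have "C (Suc k) = C k"
    proof (unfold c(2), intro set_eqI iffI)
      fix a assume "a \<in> chainE f `` {c (Suc k)}"
      then have "a \<in> CR f" "chain_rel f (c (Suc k)) a" "chain_rel f a (c (Suc k))" unfolding mem by auto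
      moreover have "chain_rel f (c k) a" using step[of k] calculation(2) chain_rel_trans by blast
      moreover have "chain_rel f a (c k)" using h calculation(3) chain_rel_trans by blast
      ultimately show "a \<in> chainE f `` {c k}" unfolding mem using c(1) by auto
    next
      fix a assume "a \<in> chainE f `` {c k}"
      then have "a \<in> CR f" "chain_rel f (c k) a" "chain_rel f a (c k)" unfolding mem by auto
      moreover have "chain_rel f (c (Suc k)) a" using h calculation(2) chain_rel_trans by blast
      moreover have "chain_rel f a (c (Suc k))" using step[of k] calculation(3) chain_rel_trans by blast
      ultimately show "a \<in> chainE f `` {c (Suc k)}" unfolding mem using c(1) by auto
    qed
    then show False using assms(3)[of k] unfolding comp_less_def by blast
  qed
  have mono: "chain_rel f (c k) (c m)" if "k < m" for k m
    using that
  proof (induction m)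
    case 0 then show ?case by simp
  next
    case (Suc m)
    then show ?case using step[of m] chain_rel_trans[of f "c k" "c m" "c (Suc m)"] less_Suc_eq by auto
  qed
  have "seq_compact (UNIV :: 'a set)" using assms(1) compact_imp_seq_compact by blast
  then obtain l r where r: "strict_mono r" "(c \<circ> r) \<longlonglongrightarrow> l"
    unfolding seq_compact_def by blast
  have kl: "chain_rel f (c k) l" for k
  proof (rule chain_rel_closed)
    show "(\<lambda>n. (c \<circ> r) (n + Suc k)) \<longlonglongrightarrow> l" using LIMSEQ_ignore_initial_segment[OF r(2)] .
    show "\<forall>n. chain_rel f (c k) ((c \<circ> r) (n + Suc k))"
    proof
      fix n
      have "n + Suc k \<le> r (n + Suc k)" using r(1) seq_suble by blast
      then show "chain_rel f (c k) ((c \<circ> r) (n + Suc k))" using mono[of k "r (n + Suc k)"] by simp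
    qed
  qed
  obtain y where y: "chain_rel f l y" "chain_rel f y y" using exists_recurrent[OF assms(1)] by blast
  have yCR: "y \<in> CR f" using y(2) unfolding CR_def by simp
  define D where "D = chainE f `` {y}"
  have yD: "y \<in> D" unfolding D_def mem using yCR y(2) by blast
  have "D \<in> chain_components f" unfolding D_def chain_components_def using yCR by (rule quotientI)
  moreover have "comp_less f D (C k)" for k
    unfolding comp_less_def comp_le_def
  proof
    have ky: "chain_rel f (c k) y" using kl y(1) chain_rel_trans by blast
    have "c k \<in> C k" unfolding c(2) mem using c(1) unfolding CR_def by auto
    then show "\<exists>x\<in>D. \<exists>y\<in>C k. chain_rel f y x" using yD ky by blast
    show "D \<noteq> C k"
    proof
      assume "D = C k"
      then have "y \<in> chainE f `` {c k}" using yD c(2) by simp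
      then have "chain_rel f y (c k)" unfolding mem by blast
      then have "chain_rel f (c (Suc k)) (c k)" using kl[of "Suc k"] y(1) chain_rel_trans by blast
      then show False using nstep by blast
    qed
  qed
  ultimately show ?thesis by blast
qed

end
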